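(* Let $G$ be a digraph and $t,t'\in B_n$ with $t\neq t'$. If $\mathbb{A}(G)$ satisfies the identity $t\approx t'$, then $M_G$ divides $M_{t,t'}$ and $P_G<H_{t,t'}$.
   Context: Digraphs $G=(V,E)$ have $E\subseteq V\times V$, loops allowed, possibly infinite. The graph algebra $\mathbb{A}(G)$ is the groupoid on $V\cup\{\infty\}$ with $xy=x$ if $x,y\in V$ and $(x,y)\in E$, and $xy=\infty$ otherwise. $B_n$ is the set of binary terms in which $x_1,\dots,x_n$ each occur once in this order; for $t\in B_n$ the rooted tree $G(t)$ is defined recursively: $G(x_i)$ is a single vertex, $G(t_1t_2)$ is $G(t_1)\cup G(t_2)$ plus an edge from the leftmost variable of $t_1$ to that of $t_2$; root $x_1$. With $T=G(t)$, $T'=G(t')$, depth $d_T$, height $h$: $H_{t,t'}=\min(h(T),h(T'))$ and $M_{t,t'}=\gcd\{|d_T(x)-d_{T'}(x)|:x\in\{x_1,\dots,x_n\}\}$. A strongly connected component (SCC) is trivial if it is a single vertex without a loop. For $m\ge1$, an $m$-whirl is a digraph whose vertex set is partitioned into nonempty blocks $B_0,\dots,B_{m-1}$ (indices mod $m$) with edge set exactly $\bigcup_iB_i\times B_{i+1}$. $M_G$ is the lcm of all $m$ such that some SCC of $G$ is an $m$-whirl ($1$ if there is none, $\infty$ if such $m$ are unbounded). A path is pleasant if all its vertices lie in trivial SCCs; $P_G$ is the maximal length of a pleasant path ($\infty$ if unbounded, $-\infty$ if none). *)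

theory Defs
  imports Main "HOL-Library.Extended_Nat" "HOL-Library.Extended_Real"
begin

text \<open>The graph algebra A(G) has carrier V plus an extra element infinity; we model its
  elements as 'v option, with None playing the role of infinity.\<close>

definition digraph :: "'v set \<Rightarrow> ('v \<times> 'v) set \<Rightarrow> bool" where
  "digraph V E \<longleftrightarrow> E \<subseteq> V \<times> V"

definition ga_carrier :: "'v set \<Rightarrow> 'v option set" where
  "ga_carrier V = Some ` V \<union> {None}"

definition ga_mult :: "('v \<times> 'v) set \<Rightarrow> 'v option \<Rightarrow> 'v option \<Rightarrow> 'v option" where
  "ga_mult E x y = (case (x, y) of
      (Some a, Some b) \<Rightarrow> (if (a, b) \<in> E then Some a else None)
    | _ \<Rightarrow> None)"

datatype tm = Var nat | App tm tm

fun vars_list :: "tm \<Rightarrow> nat list" where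
  "vars_list (Var i) = [i]"
| "vars_list (App a b) = vars_list a @ vars_list b"

definition B :: "nat \<Rightarrow> tm set" where
  "B n = {t. vars_list t = [1..<Suc n]}"

fun eval :: "('v \<times> 'v) set \<Rightarrow> (nat \<Rightarrow> 'v option) \<Rightarrow> tm \<Rightarrow> 'v option" where
  "eval E a (Var i) = a i"
| "eval E a (App s u) = ga_mult E (eval E a s) (eval E a u)"

definition satisfies :: "'v set \<Rightarrow> ('v \<times> 'v) set \<Rightarrow> tm \<Rightarrow> tm \<Rightarrow> bool" where
  "satisfies V E t t' \<longleftrightarrow>
     (\<forall>a. (\<forall>i. a i \<in> ga_carrier V) \<longrightarrow> eval E a t = eval E a t')"

fun leftmost :: "tm \<Rightarrow> nat" where
  "leftmost (Var i) = i"
| "leftmost (App a b) = leftmost a"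

fun tree_edges :: "tm \<Rightarrow> (nat \<times> nat) set" where
  "tree_edges (Var i) = {}"
| "tree_edges (App a b) = tree_edges a \<union> tree_edges b \<union> {(leftmost a, leftmost b)}"

definition depth :: "tm \<Rightarrow> nat \<Rightarrow> nat" where
  "depth t x = (LEAST k. (leftmost t, x) \<in> tree_edges t ^^ k)"

definition height :: "tm \<Rightarrow> nat" where
  "height t = Max (depth t ` set (vars_list t))"

definition H_tt :: "tm \<Rightarrow> tm \<Rightarrow> nat" where
  "H_tt t t' = min (height t) (height t')"

definition M_tt :: "nat \<Rightarrow> tm \<Rightarrow> tm \<Rightarrow> nat" where
  "M_tt n t t' = Gcd ((\<lambda>x. nat \<bar>int (depth t x) - int (depth t' x)\<bar>) ` {1..n})"

definition scc_of :: "'v set \<Rightarrow> ('v \<times> 'v) set \<Rightarrow> 'v \<Rightarrow> 'v set" where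
  "scc_of V E v = {u \<in> V. (v, u) \<in> E\<^sup>* \<and> (u, v) \<in> E\<^sup>*}"

definition sccs :: "'v set \<Rightarrow> ('v \<times> 'v) set \<Rightarrow> 'v set set" where
  "sccs V E = scc_of V E ` V"

definition trivial_scc :: "('v \<times> 'v) set \<Rightarrow> 'v set \<Rightarrow> bool" where
  "trivial_scc E C \<longleftrightarrow> (\<exists>v. C = {v} \<and> (v, v) \<notin> E)"

definition is_whirl :: "nat \<Rightarrow> 'v set \<Rightarrow> ('v \<times> 'v) set \<Rightarrow> bool" where
  "is_whirl m C F \<longleftrightarrow> m \<ge> 1 \<and>
     (\<exists>Bl :: nat \<Rightarrow> 'v set.
        (\<forall>i<m. Bl i \<noteq> {}) \<and>
        (\<forall>i<m. \<forall>j<m. i \<noteq> j \<longrightarrow> Bl i \<inter> Bl j = {}) \<and>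
        (\<Union>i<m. Bl i) = C \<and>
        F = (\<Union>i<m. Bl i \<times> Bl (Suc i mod m)))"

definition whirl_orders :: "'v set \<Rightarrow> ('v \<times> 'v) set \<Rightarrow> nat set" where
  "whirl_orders V E = {m. \<exists>C \<in> sccs V E. is_whirl m C (E \<inter> C \<times> C)}"

text \<open>M_G: lcm of whirl orders; 1 if none (Lcm {} = 1); infinity if unbounded.\<close>
definition M_G :: "'v set \<Rightarrow> ('v \<times> 'v) set \<Rightarrow> enat" where
  "M_G V E = (if finite (whirl_orders V E) then enat (Lcm (whirl_orders V E)) else \<infinity>)"

definition enat_dvd :: "enat \<Rightarrow> nat \<Rightarrow> bool" where
  "enat_dvd a b = (case a of enat m \<Rightarrow> m dvd b | \<infinity> \<Rightarrow> b = 0)"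

definition pleasant_path :: "'v set \<Rightarrow> ('v \<times> 'v) set \<Rightarrow> 'v list \<Rightarrow> bool" where
  "pleasant_path V E p \<longleftrightarrow> p \<noteq> [] \<and> set p \<subseteq> V \<and>
     (\<forall>i. Suc i < length p \<longrightarrow> (p ! i, p ! Suc i) \<in> E) \<and>
     (\<forall>v \<in> set p. trivial_scc E (scc_of V E v))"

text \<open>P_G: supremum of lengths (number of edges) of pleasant paths; -infinity if none,
  +infinity if unbounded.\<close>
definition P_G :: "'v set \<Rightarrow> ('v \<times> 'v) set \<Rightarrow> ereal" where
  "P_G V E = Sup ((\<lambda>p. ereal (real (length p - 1))) ` {p. pleasant_path V E p})"

end

theory Submission
  imports Defs
begin

fun dep :: "tm \<Rightarrow> nat \<Rightarrow> nat" where
  "dep (Var i) x = 0"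
| "dep (App a b) x = (if x \<in> set (vars_list b) then Suc (dep b x) else dep a x)"

lemma vars_ne: "vars_list t \<noteq> []"
  by (induction t) auto

lemma leftmost_hd: "leftmost t = hd (vars_list t)"
  by (induction t) (auto simp: vars_ne)

lemma leftmost_in: "leftmost t \<in> set (vars_list t)"
  by (simp add: leftmost_hd vars_ne)

lemma edges_sub: "tree_edges t \<subseteq> set (vars_list t) \<times> set (vars_list t)"
  by (induction t) (auto simp: leftmost_in)

lemma dep_root: "distinct (vars_list t) \<Longrightarrow> dep t (leftmost t) = 0"
  by (induction t) (auto, metis disjoint_iff leftmost_in)

lemma relpow_mono: "(R::('a\<times>'a) set) \<subseteq> S \<Longrightarrow> R ^^ k \<subseteq> S ^^ k"
  by (induction k) (simp_all add: relcomp_mono)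

lemma dep_edge: "distinct (vars_list t) \<Longrightarrow> (u, v) \<in> tree_edges t \<Longrightarrow> dep t v = Suc (dep t u)"
proof (induction t)
  case (Var x)
  then show ?case by simp
next
  case (App a b)
  have da: "distinct (vars_list a)" and db: "distinct (vars_list b)"
    and dj: "set (vars_list a) \<inter> set (vars_list b) = {}" using App.prems(1) by auto
  show ?case
  proof -
    have "(u, v) \<in> tree_edges a \<or> (u, v) \<in> tree_edges b \<or> (u, v) = (leftmost a, leftmost b)"
      using App.prems(2) by auto
    moreover
    { assume h: "(u, v) \<in> tree_edges a"
      then have "u \<in> set (vars_list a)" "v \<in> set (vars_list a)" using edges_sub by blast+
      then have ?thesis using App.IH(1)[OF da h] dj by auto }
    moreover
    { assume h: "(u, v) \<in> tree_edges b"
      then have "u \<in> set (vars_list b)" "v \<in> set (vars_list b)" using edges_sub by blast+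
      then have ?thesis using App.IH(2)[OF db h] dj by auto }
    moreover
    { assume h: "(u, v) = (leftmost a, leftmost b)"
      then have ?thesis using dj leftmost_in[of a] leftmost_in[of b] dep_root[OF db] dep_root[OF da] by auto }
    ultimately show ?thesis by blast
  qed
qed

lemma dep_path: "x \<in> set (vars_list t) \<Longrightarrow> (leftmost t, x) \<in> tree_edges t ^^ dep t x"
proof (induction t arbitrary: x)
  case (Var i)
  then show ?case by simp
next
  case (App a b)
  show ?case
  proof (cases "x \<in> set (vars_list b)")
    case True
    have "(leftmost b, x) \<in> tree_edges b ^^ dep b x" using App.IH(2)[OF True] .
    then have "(leftmost b, x) \<in> tree_edges (App a b) ^^ dep b x"
      using relpow_mono[of "tree_edges b" "tree_edges (App a b)"] by auto
    moreover have "(leftmost a, leftmost b) \<in> tree_edges (App a b) ^^ 1" by simp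
    ultimately have "(leftmost a, x) \<in> tree_edges (App a b) ^^ (1 + dep b x)"
      by (metis relcompI relpow_add)
    then show ?thesis using True by simp
  next
    case False
    then have xa: "x \<in> set (vars_list a)" using App.prems by auto
    have "(leftmost a, x) \<in> tree_edges a ^^ dep a x" using App.IH(1)[OF xa] .
    then have "(leftmost a, x) \<in> tree_edges (App a b) ^^ dep a x"
      using relpow_mono[of "tree_edges a" "tree_edges (App a b)"] by auto
    then show ?thesis using False by simp
  qed
qed

lemma path_dep: "distinct (vars_list t) \<Longrightarrow> (leftmost t, x) \<in> tree_edges t ^^ k \<Longrightarrow> k = dep t x"
proof (induction k arbitrary: x)
  case 0
  then show ?case using dep_root by auto
next
  case (Suc k)
  then obtain y where "(leftmost t, y) \<in> tree_edges t ^^ k" "(y, x) \<in> tree_edges t" by auto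
  then show ?case using Suc dep_edge by metis
qed

lemma depth_dep: "distinct (vars_list t) \<Longrightarrow> x \<in> set (vars_list t) \<Longrightarrow> depth t x = dep t x"
  unfolding depth_def
  by (rule Least_equality) (auto intro: dep_path dest: path_dep)

lemma dep0: "distinct (vars_list t) \<Longrightarrow> x \<in> set (vars_list t) \<Longrightarrow> dep t x = 0 \<Longrightarrow> x = leftmost t"
  by (induction t) (auto split: if_splits)

definition hom :: "('v \<times> 'v) set \<Rightarrow> (nat \<Rightarrow> 'v option) \<Rightarrow> tm \<Rightarrow> bool" where
  "hom E a t \<longleftrightarrow> (\<forall>i\<in>set (vars_list t). a i \<noteq> None) \<and>
     (\<forall>(u, v)\<in>tree_edges t. \<exists>p q. a u = Some p \<and> a v = Some q \<and> (p, q) \<in> E)"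

lemma eval_hom: "eval E a t = (if hom E a t then a (leftmost t) else None)"
proof (induction t)
  case (Var x)
  then show ?case by (cases "a x") (auto simp: hom_def)
next
  case (App s u)
  have hs: "hom E a (App s u) \<longleftrightarrow> hom E a s \<and> hom E a u \<and>
     (\<exists>p q. a (leftmost s) = Some p \<and> a (leftmost u) = Some q \<and> (p, q) \<in> E)"
    unfolding hom_def by (auto; blast)
  show ?case
  proof (cases "hom E a s \<and> hom E a u")
    case True
    then obtain p q where "a (leftmost s) = Some p" "a (leftmost u) = Some q"
      using leftmost_in unfolding hom_def by (metis not_None_eq)
    then show ?thesis using True hs App.IH by (auto simp: ga_mult_def)
  next
    case False
    then show ?thesis using hs App.IH by (auto simp: ga_mult_def split: option.splits)
  qed
qed


lemma upt_split: "xs @ ys = [i..<j] \<Longrightarrow> xs = [i..<i + length xs] \<and> ys = [i + length xs..<j]"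
proof (induction xs arbitrary: i)
  case Nil
  then show ?case by simp
next
  case (Cons x xs)
  then have "i < j" by (metis Nil_is_append_conv list.distinct(1) upt_eq_Nil_conv not_less)
  then have "x # (xs @ ys) = i # [Suc i..<j]" using Cons.prems by (simp add: upt_conv_Cons)
  then have "x = i" "xs @ ys = [Suc i..<j]" by auto
  then show ?case using Cons.IH[of "Suc i"] by (simp add: upt_conv_Cons del: upt_Suc)
qed

lemma len_app: "length (vars_list (App a b)) \<ge> 2"
  using vars_ne[of a] vars_ne[of b] by (cases "vars_list a"; cases "vars_list b") auto

lemma split_aux:
  assumes "vars_list a @ vars_list b = [i..<j]" "vars_list a' @ vars_list b' = [i..<j]"
    and "leftmost b < leftmost b'"
  shows "\<exists>x\<in>set [i..<j]. dep (App a b) x \<noteq> dep (App a' b') x"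
proof -
  let ?p = "leftmost b" and ?q = "leftmost b'"
  have s1: "vars_list b = [i + length (vars_list a)..<j]" using upt_split[OF assms(1)] by blast
  have s2: "vars_list b' = [i + length (vars_list a')..<j]" using upt_split[OF assms(2)] by blast
  have p: "?p = i + length (vars_list a)" "?p < j"
    using s1 vars_ne[of b] leftmost_hd[of b] by (auto simp: hd_upt)
  have q: "?q = i + length (vars_list a')" "?q < j"
    using s2 vars_ne[of b'] leftmost_hd[of b'] by (auto simp: hd_upt)
  have db: "distinct (vars_list b)" "distinct (vars_list b')"
    using assms(1,2) by (metis distinct_append distinct_upt)+
  have qb: "?q \<in> set (vars_list b)" using s1 p q assms(3) by auto
  have "dep b ?q \<noteq> 0" using dep0[OF db(1) qb] assms(3) by auto
  then have "dep (App a b) ?q \<ge> 2" using qb by simp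
  moreover have "dep (App a' b') ?q = 1" using dep_root[OF db(2)] leftmost_in[of b'] by simp
  moreover have "?q \<in> set [i..<j]" using q by simp
  ultimately show ?thesis by (intro bexI[of _ ?q]) auto
qed

lemma dep_inj:
  "vars_list t = [i..<j] \<Longrightarrow> vars_list t' = [i..<j] \<Longrightarrow> (\<forall>x\<in>set [i..<j]. dep t x = dep t' x) \<Longrightarrow> t = t'"
proof (induction t arbitrary: t' i j)
  case (Var k)
  show ?case
  proof (cases t')
    case (Var k')
    then show ?thesis using Var.prems by (metis vars_list.simps(1) list.inject)
  next
    case (App a' b')
    have "length [i..<j] = 1" using Var.prems(1) by (metis vars_list.simps(1) length_Cons list.size(3) One_nat_def)
    moreover have "length [i..<j] \<ge> 2" using Var.prems(2) len_app[of a' b'] App by simp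
    ultimately show ?thesis by simp
  qed
next
  case (App a b)
  obtain a' b' where t': "t' = App a' b'"
  proof (cases t')
    case (Var k)
    have "length [i..<j] = 1" using App.prems(2) Var by (metis vars_list.simps(1) length_Cons list.size(3) One_nat_def)
    moreover have "length [i..<j] \<ge> 2" using App.prems(1) len_app[of a b] by simp
    ultimately show ?thesis by simp
  qed auto
  have e1: "vars_list a @ vars_list b = [i..<j]" using App.prems by simp
  have e2: "vars_list a' @ vars_list b' = [i..<j]" using App.prems t' by simp
  have "\<not> leftmost b < leftmost b'"
    using split_aux[OF e1 e2] App.prems(3) t' by auto
  moreover have "\<not> leftmost b' < leftmost b"
    using split_aux[OF e2 e1] App.prems(3) t' by force
  ultimately have pq: "leftmost b = leftmost b'" by simp
  have s1: "vars_list a = [i..<i + length (vars_list a)]" "vars_list b = [i + length (vars_list a)..<j]"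
    using upt_split[OF e1] by blast+
  have s2: "vars_list a' = [i..<i + length (vars_list a')]" "vars_list b' = [i + length (vars_list a')..<j]"
    using upt_split[OF e2] by blast+
  have "i + length (vars_list a) = i + length (vars_list a')"
    using pq s1 s2 vars_ne[of b] vars_ne[of b'] leftmost_hd[of b] leftmost_hd[of b']
    by (metis hd_upt upt_eq_Nil_conv not_less)
  then have la: "length (vars_list a) = length (vars_list a')" by simp
  let ?p = "i + length (vars_list a)"
  have va: "vars_list a' = [i..<?p]" "vars_list b' = [?p..<j]" using s2 la by auto
  have "a = a'"
  proof (rule App.IH(1)[OF s1(1)])
    show "vars_list a' = [i..<?p]" using va by simp
    show "\<forall>x\<in>set [i..<?p]. dep a x = dep a' x"
    proof
      fix x assume x: "x \<in> set [i..<?p]"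
      then have xr: "i \<le> x" "x < ?p" by simp_all
      have "length (vars_list a) + length (vars_list b) = j - i" using arg_cong[OF e1, of length] by simp
      then have "?p \<le> j" using vars_ne[of b] by (cases "vars_list b") auto
      then have "x \<notin> set (vars_list b)" "x \<notin> set (vars_list b')" "x \<in> set [i..<j]"
        using xr by (simp_all only: s1(2) va(2) set_upt) auto
      then show "dep a x = dep a' x" using App.prems(3) t' by force
    qed
  qed
  moreover have "b = b'"
  proof (rule App.IH(2)[OF s1(2)])
    show "vars_list b' = [?p..<j]" using va by simp
    show "\<forall>x\<in>set [?p..<j]. dep b x = dep b' x"
    proof
      fix x assume x: "x \<in> set [?p..<j]"
      then have "x \<in> set (vars_list b)" "x \<in> set (vars_list b')" and x_in_ij: "x \<in> set [i..<j]"
        using s1 va by auto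
      moreover have "dep (App a b) x = dep (App a' b') x" using App.prems(3) t' x_in_ij by blast
      ultimately show "dep b x = dep b' x" by simp
    qed
  qed
  ultimately show ?case using t' by simp
qed


lemma B_facts:
  assumes "t \<in> B n"
  shows "vars_list t = [1..<Suc n]" "distinct (vars_list t)" "leftmost t = 1"
    "set (vars_list t) = {1..n}"
proof -
  show v: "vars_list t = [1..<Suc n]" using assms by (simp add: B_def)
  then show "distinct (vars_list t)" by simp
  have "n \<ge> 1" using v vars_ne[of t] by (cases n) auto
  then show "leftmost t = 1" using v leftmost_hd[of t] by (simp add: hd_upt del: upt_Suc)
  show "set (vars_list t) = {1..n}" using v by auto
qed

lemma sat_hom:
  assumes "satisfies V E s s'" "\<forall>i. a i \<in> ga_carrier V" "hom E a s" "\<forall>i. a i \<noteq> None"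
  shows "hom E a s'"
proof -
  have "eval E a s = a (leftmost s)" using assms(3) eval_hom by metis
  then have "eval E a s' \<noteq> None" using assms(1,2,4) unfolding satisfies_def by metis
  then show ?thesis using eval_hom by (metis)
qed

lemma path_rt:
  assumes "\<forall>i. Suc i < length p \<longrightarrow> (p ! i, p ! Suc i) \<in> E"
  shows "j \<le> i \<Longrightarrow> i < length p \<Longrightarrow> (p ! j, p ! i) \<in> E\<^sup>*"
proof (induction i)
  case 0
  then show ?case by simp
next
  case (Suc i)
  show ?case
  proof (cases "j = Suc i")
    case True
    then show ?thesis by simp
  next
    case False
    then have "(p ! j, p ! i) \<in> E\<^sup>*" using Suc by simp
    moreover have "(p ! i, p ! Suc i) \<in> E" using assms Suc.prems by simp
    ultimately show ?thesis by simp
  qed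
qed

lemma pp_forward:
  assumes pp: "pleasant_path V E p" and "i < length p" "j < length p" "(p ! i, p ! j) \<in> E"
  shows "i < j"
proof (rule ccontr)
  assume "\<not> i < j"
  then have ji: "j \<le> i" by simp
  have rt: "(p ! j, p ! i) \<in> E\<^sup>*"
    using path_rt[OF _ ji assms(2)] pp unfolding pleasant_path_def by blast
  have inV: "p ! i \<in> V" "p ! j \<in> V" using pp assms(2,3) unfolding pleasant_path_def
    by (auto dest: nth_mem)
  have "trivial_scc E (scc_of V E (p ! i))" using pp assms(2) unfolding pleasant_path_def
    by (auto dest: nth_mem)
  then obtain w where w: "scc_of V E (p ! i) = {w}" "(w, w) \<notin> E" unfolding trivial_scc_def by blast
  have "p ! i \<in> scc_of V E (p ! i)" using inV unfolding scc_of_def by simp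
  moreover have "p ! j \<in> scc_of V E (p ! i)" using inV rt assms(4) unfolding scc_of_def by auto
  ultimately show False using w assms(4) by auto
qed

definition hgt :: "tm \<Rightarrow> nat" where
  "hgt t = Max (dep t ` set (vars_list t))"

lemma height_hgt: "distinct (vars_list t) \<Longrightarrow> height t = hgt t"
  unfolding height_def hgt_def using depth_dep by (metis image_cong)

lemma dep_le_hgt: "x \<in> set (vars_list t) \<Longrightarrow> dep t x \<le> hgt t"
  unfolding hgt_def by simp

lemma lemA:
  assumes sat: "satisfies V E s s'" and s: "s \<in> B n" and s': "s' \<in> B n"
    and pp: "pleasant_path V E p" and h: "hgt s < length p"
  shows "\<forall>x\<in>set (vars_list s'). dep s' x \<le> dep s x"
proof -
  note bs = B_facts[OF s] and bs' = B_facts[OF s']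
  define a where "a x = Some (p ! min (dep s x) (length p - 1))" for x
  have pne: "p \<noteq> []" using pp unfolding pleasant_path_def by simp
  have pV: "k < length p \<Longrightarrow> p ! k \<in> V" for k using pp unfolding pleasant_path_def by auto
  have "min k (length p - 1) < length p" for k using pne by (cases p) (auto simp: min_def)
  then have "p ! min k (length p - 1) \<in> V" for k using pV by blast
  then have carr: "\<forall>i. a i \<in> ga_carrier V" unfolding a_def ga_carrier_def by auto
  have aval: "a x = Some (p ! dep s x)" if "x \<in> set (vars_list s)" for x
  proof -
    have "dep s x \<le> length p - 1" using dep_le_hgt[OF that] h by linarith
    then show ?thesis unfolding a_def by (simp only: min_absorb1)
  qed
  have pe: "Suc k < length p \<Longrightarrow> (p ! k, p ! Suc k) \<in> E" for k
    using pp unfolding pleasant_path_def by blast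
  have "hom E a s" unfolding hom_def
  proof (intro conjI ballI)
    show "a i \<noteq> None" for i by (simp add: a_def)
    fix e assume e: "e \<in> tree_edges s"
    obtain u v where uv: "e = (u, v)" by fastforce
    have uvs: "u \<in> set (vars_list s)" "v \<in> set (vars_list s)" using e uv edges_sub by blast+
    have dv: "dep s v = Suc (dep s u)" using dep_edge[OF bs(2)] e uv by simp
    have "dep s v < length p" using dep_le_hgt[OF uvs(2)] h by simp
    then have "(p ! dep s u, p ! dep s v) \<in> E" using pe dv by simp
    then show "case e of (u, v) \<Rightarrow> \<exists>p q. a u = Some p \<and> a v = Some q \<and> (p, q) \<in> E"
      using uv aval uvs by simp
  qed
  moreover have "\<forall>i. a i \<noteq> None" by (simp add: a_def)
  ultimately have hs': "hom E a s'" using sat_hom[OF sat carr] by blast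
  have inc: "(u, v) \<in> tree_edges s' \<Longrightarrow> dep s u < dep s v" for u v
  proof -
    assume e: "(u, v) \<in> tree_edges s'"
    have uvs: "u \<in> set (vars_list s)" "v \<in> set (vars_list s)"
      using e edges_sub[of s'] bs(1) bs'(1) by auto
    have "(p ! dep s u, p ! dep s v) \<in> E" using hs' e aval uvs unfolding hom_def by fastforce
    moreover have "dep s u < length p" "dep s v < length p"
      using dep_le_hgt[OF uvs(1)] dep_le_hgt[OF uvs(2)] h by simp_all
    ultimately show ?thesis using pp_forward[OF pp] by blast
  qed
  have ind: "(leftmost s', x) \<in> tree_edges s' ^^ k \<Longrightarrow> k \<le> dep s x" for k x
  proof (induction k arbitrary: x)
    case 0
    then show ?case by simp
  next
    case (Suc k)
    then obtain y where "(leftmost s', y) \<in> tree_edges s' ^^ k" "(y, x) \<in> tree_edges s'" by auto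
    then show ?case using Suc.IH inc by fastforce
  qed
  show ?thesis using ind dep_path by blast
qed

lemma Max_mono_img:
  assumes "finite S" "S \<noteq> {}" "\<forall>x\<in>S. (f x :: nat) \<le> g x"
  shows "Max (f ` S) \<le> Max (g ` S)"
proof -
  have "Max (f ` S) \<in> f ` S" using assms by (intro Max_in) auto
  then obtain x where "x \<in> S" "Max (f ` S) = f x" by auto
  then show ?thesis using assms by (metis Max_ge finite_imageI image_eqI order_trans)
qed

lemma lemB:
  assumes sat: "satisfies V E s s'" and s: "s \<in> B n" and s': "s' \<in> B n"
    and pp: "pleasant_path V E p" and h: "hgt s < length p"
  shows "s = s'"
proof -
  note bs = B_facts[OF s] and bs' = B_facts[OF s']
  have sat': "satisfies V E s' s" using sat unfolding satisfies_def by metis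
  have le1: "\<forall>x\<in>set (vars_list s'). dep s' x \<le> dep s x" using lemA[OF sat s s' pp h] .
  have eqs: "set (vars_list s') = set (vars_list s)" using bs(1) bs'(1) by simp
  have "hgt s' \<le> Max (dep s ` set (vars_list s'))" unfolding hgt_def using le1 vars_ne[of s']
    by (intro Max_mono_img) auto
  also have "\<dots> = hgt s" unfolding hgt_def eqs ..
  finally have "hgt s' \<le> hgt s" .
  then have "hgt s' < length p" using h by simp
  then have le2: "\<forall>x\<in>set (vars_list s). dep s x \<le> dep s' x" using lemA[OF sat' s' s pp] by blast
  have "\<forall>x\<in>set [1..<Suc n]. dep s x = dep s' x" using le1 le2 bs(1) bs'(1)
    by (metis order_antisym)
  then show ?thesis using dep_inj bs(1) bs'(1) by blast
qed


lemma whirl_dvd: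
  assumes sat: "satisfies V E t t'" and tB: "t \<in> B n" and tB': "t' \<in> B n"
    and C: "C \<in> sccs V E" and w: "is_whirl m C (E \<inter> C \<times> C)"
  shows "m dvd M_tt n t t'"
proof -
  note bs = B_facts[OF tB] and bs' = B_facts[OF tB']
  have m1: "m \<ge> 1" using w unfolding is_whirl_def by simp
  obtain Bl where ne: "\<forall>i<m. Bl i \<noteq> {}" and dis: "\<forall>i<m. \<forall>j<m. i \<noteq> j \<longrightarrow> Bl i \<inter> Bl j = {}"
    and un: "(\<Union>i<m. Bl i) = C" and F: "E \<inter> C \<times> C = (\<Union>i<m. Bl i \<times> Bl (Suc i mod m))"
    using w unfolding is_whirl_def by blast
  have CV: "C \<subseteq> V" using C unfolding sccs_def scc_of_def by auto
  define b where "b i = (SOME x. x \<in> Bl i)" for i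
  have bB: "i < m \<Longrightarrow> b i \<in> Bl i" for i unfolding b_def using ne by (simp add: some_in_eq)
  have bC: "i < m \<Longrightarrow> b i \<in> C" for i using bB un by blast
  have bE1: "i < m \<Longrightarrow> (b i, b (Suc i mod m)) \<in> E" for i
  proof -
    assume i: "i < m"
    have "Suc i mod m < m" using m1 by simp
    then have "(b i, b (Suc i mod m)) \<in> Bl i \<times> Bl (Suc i mod m)" using bB i by simp
    then show ?thesis using F i by blast
  qed
  have bE2: "i < m \<Longrightarrow> j < m \<Longrightarrow> (b i, b j) \<in> E \<Longrightarrow> j = Suc i mod m" for i j
  proof -
    assume i: "i < m" and j: "j < m" and e: "(b i, b j) \<in> E"
    then have "(b i, b j) \<in> E \<inter> C \<times> C" using bC by blast
    then obtain k where k: "k < m" "b i \<in> Bl k" "b j \<in> Bl (Suc k mod m)" using F by blast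
    have "k = i" using dis k bB[OF i] i by blast
    moreover have "Suc k mod m < m" using m1 by simp
    ultimately show "j = Suc i mod m" using dis k bB[OF j] j by blast
  qed
  define a where "a x = Some (b (dep t x mod m))" for x
  have "k mod m < m" for k using m1 by simp
  then have "b (k mod m) \<in> V" for k using bC CV by blast
  then have carr: "\<forall>i. a i \<in> ga_carrier V" unfolding a_def ga_carrier_def by auto
  have "hom E a t" unfolding hom_def
  proof (intro conjI ballI)
    show "a i \<noteq> None" for i by (simp add: a_def)
    fix e assume e: "e \<in> tree_edges t"
    obtain u v where uv: "e = (u, v)" by fastforce
    have dv: "dep t v = Suc (dep t u)" using dep_edge[OF bs(2)] e uv by simp
    have "dep t v mod m = Suc (dep t u mod m) mod m" using dv by (simp add: mod_Suc_eq)
    then have "(b (dep t u mod m), b (dep t v mod m)) \<in> E" using bE1 m1 by simp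
    then show "case e of (u, v) \<Rightarrow> \<exists>p q. a u = Some p \<and> a v = Some q \<and> (p, q) \<in> E"
      using uv by (simp add: a_def)
  qed
  moreover have "\<forall>i. a i \<noteq> None" by (simp add: a_def)
  ultimately have hs': "hom E a t'" using sat_hom[OF sat carr] by blast
  have stp: "(u, v) \<in> tree_edges t' \<Longrightarrow> dep t v mod m = Suc (dep t u) mod m" for u v
  proof -
    assume e: "(u, v) \<in> tree_edges t'"
    have "(b (dep t u mod m), b (dep t v mod m)) \<in> E" using hs' e unfolding hom_def a_def by fastforce
    then have "dep t v mod m = Suc (dep t u mod m) mod m" using bE2 m1 by simp
    then show ?thesis by (simp add: mod_Suc_eq)
  qed
  have ind: "(leftmost t', x) \<in> tree_edges t' ^^ k \<Longrightarrow> dep t x mod m = k mod m" for k x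
  proof (induction k arbitrary: x)
    case 0
    then show ?case using dep_root[OF bs(2)] bs(3) bs'(3) by simp
  next
    case (Suc k)
    then obtain y where "(leftmost t', y) \<in> tree_edges t' ^^ k" "(y, x) \<in> tree_edges t'" by auto
    then show ?case using Suc.IH stp by (metis mod_Suc_eq)
  qed
  have "m dvd nat \<bar>int (depth t x) - int (depth t' x)\<bar>" if x: "x \<in> {1..n}" for x
  proof -
    have xv: "x \<in> set (vars_list t)" "x \<in> set (vars_list t')" using x bs(4) bs'(4) by auto
    have eq: "dep t x mod m = dep t' x mod m" using ind dep_path[OF xv(2)] by blast
    have "depth t x = dep t x" "depth t' x = dep t' x"
      using depth_dep[OF bs(2) xv(1)] depth_dep[OF bs'(2) xv(2)] by simp_all
    moreover have "m dvd nat \<bar>int (dep t x) - int (dep t' x)\<bar>"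
    proof (cases "dep t' x \<le> dep t x")
      case True
      then have "nat \<bar>int (dep t x) - int (dep t' x)\<bar> = dep t x - dep t' x" by simp
      then show ?thesis using eq True by (simp add: mod_eq_dvd_iff_nat)
    next
      case False
      then have "nat \<bar>int (dep t x) - int (dep t' x)\<bar> = dep t' x - dep t x" by simp
      then show ?thesis using eq[symmetric] False by (simp add: mod_eq_dvd_iff_nat)
    qed
    ultimately show ?thesis by simp
  qed
  then show ?thesis unfolding M_tt_def by (intro Gcd_greatest) auto
qed

theorem lemma6p6:
  fixes V :: "'v set" and E :: "('v \<times> 'v) set" and n :: nat and t t' :: tm
  assumes "digraph V E"
    and "t \<in> B n" and "t' \<in> B n" and "t \<noteq> t'"
    and "satisfies V E t t'"
  shows "enat_dvd (M_G V E) (M_tt n t t') \<and> P_G V E < ereal (real (H_tt t t'))"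
proof
  have alld: "\<forall>m\<in>whirl_orders V E. m dvd M_tt n t t'"
    using whirl_dvd[OF assms(5,2,3)] unfolding whirl_orders_def by blast
  show "enat_dvd (M_G V E) (M_tt n t t')"
  proof (cases "finite (whirl_orders V E)")
    case True
    then show ?thesis using alld unfolding M_G_def enat_dvd_def by (simp add: Lcm_least)
  next
    case False
    have "M_tt n t t' = 0"
    proof (rule ccontr)
      assume "M_tt n t t' \<noteq> 0"
      then have "whirl_orders V E \<subseteq> {..M_tt n t t'}" using alld by (auto intro: dvd_imp_le)
      then show False using False finite_subset by blast
    qed
    then show ?thesis using False unfolding M_G_def enat_dvd_def by simp
  qed
next
  note bs = B_facts[OF assms(2)] and bs' = B_facts[OF assms(3)]
  have sat': "satisfies V E t' t" using assms(5) unfolding satisfies_def by metis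
  let ?H = "H_tt t t'"
  have lt: "length p - 1 < ?H" if pp: "pleasant_path V E p" for p
  proof (rule ccontr)
    assume "\<not> length p - 1 < ?H"
    then have ge: "?H < length p" using pp unfolding pleasant_path_def by (cases p) auto
    have Hm: "?H = min (hgt t) (hgt t')" unfolding H_tt_def
      using height_hgt[OF bs(2)] height_hgt[OF bs'(2)] by simp
    show False
    proof (cases "hgt t \<le> hgt t'")
      case True
      then have "hgt t < length p" using ge Hm by simp
      then show False using lemB[OF assms(5,2,3) pp] assms(4) by blast
    next
      case False
      then have "hgt t' < length p" using ge Hm by simp
      then show False using lemB[OF sat' assms(3,2) pp] assms(4) by blast
    qed
  qed
  have "P_G V E \<le> ereal (real ?H - 1)"
    unfolding P_G_def
  proof (rule Sup_least)
    fix y assume "y \<in> (\<lambda>p. ereal (real (length p - 1))) ` {p. pleasant_path V E p}"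
    then obtain p where pp: "pleasant_path V E p" and y: "y = ereal (real (length p - 1))" by auto
    have "length p - 1 < ?H" using lt[OF pp] .
    then have "real (length p - 1) \<le> real ?H - 1" by linarith
    then show "y \<le> ereal (real ?H - 1)" using y by simp
  qed
  also have "\<dots> < ereal (real ?H)" by simp
  finally show "P_G V E < ereal (real ?H)" .
qed

end
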